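(* Let $G$ be a finite simple graph and let $v_1,\dots,v_r$, $r\ge 2$, be an $\alpha$-sequence in $G$ such that $N(v_1,\dots,v_{r-1})$ is a $\delta$-set in $G$. Then (a) $\varphi(G)\le r\le \omega(G)$; and (b) $r\ge W(G)$.
   Context: Graphs are finite, undirected, without loops or multiple edges; $n=|V(G)|$, $N(v)$ is the set of vertices adjacent to $v$, $d(v)=|N(v)|$, and for $V\subseteq V(G)$, $N(V)=\bigcap_{v\in V}N(v)$; $N(v_1,\dots,v_k)$ means $N(\{v_1,\dots,v_k\})$. $\omega(G)$ is the clique number of $G$ (largest $p$ such that $G$ has $p$ pairwise adjacent vertices). For $V\subseteq V(G)$ define $W(V)=\sum_{v\in V}\frac{1}{n-d(v)}$ and $W(G)=W(V(G))$. A set $V\subseteq V(G)$ is a $\delta$-set in $G$ if $d(v)\le n-|V|$ for all $v\in V$. $G$ is a generalized $r$-partite graph if $V(G)=V_1\cup\dots\cup V_r$ with $V_i\cap V_j=\emptyset$ for $i\ne j$ and each $V_i$ a $\delta$-set in $G$; $\varphi(G)$ is the smallest such $r$. A sequence $v_1,\dots,v_r$ of vertices is an $\alpha$-sequence in $G$ if (i) $d(v_1)=\max\{d(v)\mid v\in V(G)\}$, and (ii) for $2\le i\le r$, $v_i\in N(v_1,\dots,v_{i-1})$ and $v_i$ has maximal degree in the induced subgraph $G[N(v_1,\dots,v_{i-1})]$. *)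

theory Defs
  imports Complex_Main
begin

definition simple_graph :: "'a set \<Rightarrow> ('a \<Rightarrow> 'a \<Rightarrow> bool) \<Rightarrow> bool" where
  "simple_graph V E \<longleftrightarrow> finite V \<and> (\<forall>u v. E u v \<longrightarrow> u \<in> V \<and> v \<in> V)
     \<and> (\<forall>u v. E u v \<longrightarrow> E v u) \<and> (\<forall>v. \<not> E v v)"

definition nbhd :: "'a set \<Rightarrow> ('a \<Rightarrow> 'a \<Rightarrow> bool) \<Rightarrow> 'a \<Rightarrow> 'a set" where
  "nbhd V E v = {u \<in> V. E v u}"

definition degree :: "'a set \<Rightarrow> ('a \<Rightarrow> 'a \<Rightarrow> bool) \<Rightarrow> 'a \<Rightarrow> nat" where
  "degree V E v = card (nbhd V E v)"

text \<open>N(S) = intersection of N(v), v in S (all of V for S empty)\<close>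
definition common_nbhd :: "'a set \<Rightarrow> ('a \<Rightarrow> 'a \<Rightarrow> bool) \<Rightarrow> 'a set \<Rightarrow> 'a set" where
  "common_nbhd V E S = {u \<in> V. \<forall>v \<in> S. E v u}"

definition W :: "'a set \<Rightarrow> ('a \<Rightarrow> 'a \<Rightarrow> bool) \<Rightarrow> real" where
  "W V E = (\<Sum>v\<in>V. 1 / real (card V - degree V E v))"

definition delta_set :: "'a set \<Rightarrow> ('a \<Rightarrow> 'a \<Rightarrow> bool) \<Rightarrow> 'a set \<Rightarrow> bool" where
  "delta_set V E S \<longleftrightarrow> S \<subseteq> V \<and> (\<forall>v \<in> S. int (degree V E v) \<le> int (card V) - int (card S))"

text \<open>generalized r-partite: V partitioned into r pairwise disjoint delta-sets
  V_0..V_{r-1} (given by a labelling f : V -> {0..<r}; parts may be empty)\<close>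
definition gen_partite :: "'a set \<Rightarrow> ('a \<Rightarrow> 'a \<Rightarrow> bool) \<Rightarrow> nat \<Rightarrow> bool" where
  "gen_partite V E r \<longleftrightarrow> (\<exists>f. (\<forall>v \<in> V. f v < r) \<and>
      (\<forall>i < r. delta_set V E {v \<in> V. f v = i}))"

definition phi :: "'a set \<Rightarrow> ('a \<Rightarrow> 'a \<Rightarrow> bool) \<Rightarrow> nat" where
  "phi V E = (LEAST r. gen_partite V E r)"

definition clique :: "'a set \<Rightarrow> ('a \<Rightarrow> 'a \<Rightarrow> bool) \<Rightarrow> 'a set \<Rightarrow> bool" where
  "clique V E K \<longleftrightarrow> K \<subseteq> V \<and> (\<forall>u \<in> K. \<forall>v \<in> K. u \<noteq> v \<longrightarrow> E u v)"

definition omega :: "'a set \<Rightarrow> ('a \<Rightarrow> 'a \<Rightarrow> bool) \<Rightarrow> nat" where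
  "omega V E = Max {card K | K. clique V E K}"

definition max_deg_in :: "'a set \<Rightarrow> ('a \<Rightarrow> 'a \<Rightarrow> bool) \<Rightarrow> 'a set \<Rightarrow> 'a \<Rightarrow> bool" where
  "max_deg_in V E S v \<longleftrightarrow> v \<in> S \<and>
     (\<forall>u \<in> S. card (nbhd V E u \<inter> S) \<le> card (nbhd V E v \<inter> S))"

text \<open>alpha-sequence v_1,...,v_r, stored as a list xs (xs ! (i-1) = v_i)\<close>
definition alpha_seq :: "'a set \<Rightarrow> ('a \<Rightarrow> 'a \<Rightarrow> bool) \<Rightarrow> 'a list \<Rightarrow> bool" where
  "alpha_seq V E xs \<longleftrightarrow> xs \<noteq> [] \<and>
     (xs ! 0 \<in> V \<and> (\<forall>u \<in> V. degree V E u \<le> degree V E (xs ! 0))) \<and>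
     (\<forall>i. 1 \<le> i \<and> i < length xs \<longrightarrow>
        max_deg_in V E (common_nbhd V E (set (take i xs))) (xs ! i))"

end

theory Submission
  imports Defs
begin

lemma part_sum_le1:
  assumes sg: "simple_graph V E" and d: "delta_set V E P"
  shows "(\<Sum>v\<in>P. 1 / real (card V - degree V E v)) \<le> 1"
proof (cases "P = {}")
  case True then show ?thesis by simp
next
  case False
  have fV: "finite V" using sg by (simp add: simple_graph_def)
  have PV: "P \<subseteq> V" using d by (simp add: delta_set_def)
  have fP: "finite P" using fV PV finite_subset by blast
  have cP: "card P \<ge> 1" using False fP by (simp add: Suc_le_eq card_gt_0_iff)
  have "(\<Sum>v\<in>P. 1 / real (card V - degree V E v)) \<le> (\<Sum>v\<in>P. 1 / real (card P))"
  proof (rule sum_mono)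
    fix v assume v: "v \<in> P"
    have "int (degree V E v) \<le> int (card V) - int (card P)" using d v by (simp add: delta_set_def)
    then have "card P \<le> card V - degree V E v" by linarith
    then have "real (card P) \<le> real (card V - degree V E v)" by simp
    then show "1 / real (card V - degree V E v) \<le> 1 / real (card P)"
      using cP by (intro divide_left_mono) auto
  qed
  also have "\<dots> = 1" using cP by simp
  finally show ?thesis .
qed

lemma gp_W:
  assumes sg: "simple_graph V E" and f: "\<forall>v \<in> V. f v < r"
    and d: "\<forall>i < r. delta_set V E {v \<in> V. f v = i}"
  shows "W V E \<le> real r"
proof -
  have fV: "finite V" using sg by (simp add: simple_graph_def)
  have "W V E = (\<Sum>i\<in>{..<r}. \<Sum>v\<in>{v \<in> V. f v = i}. 1 / real (card V - degree V E v))"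
    unfolding W_def by (rule sum.group[symmetric]) (use fV f in auto)
  also have "\<dots> \<le> (\<Sum>i\<in>{..<r}. 1)"
    by (rule sum_mono) (use d part_sum_le1[OF sg] in auto)
  finally show ?thesis by simp
qed

theorem theorem1:
  fixes V :: "'a set" and E :: "'a \<Rightarrow> 'a \<Rightarrow> bool" and xs :: "'a list" and r :: nat
  assumes "simple_graph V E"
    and "alpha_seq V E xs" and "length xs = r" and "r \<ge> 2"
    and "delta_set V E (common_nbhd V E (set (take (r - 1) xs)))"
  shows "phi V E \<le> r \<and> r \<le> omega V E \<and> real r \<ge> W V E"
proof -
  note sg = assms(1) and al = assms(2) and len = assms(3) and r2 = assms(4) and dl = assms(5)
  have fV: "finite V" and Esym: "\<And>u v. E u v \<Longrightarrow> E v u" and Eirr: "\<And>v. \<not> E v v"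
    and EV: "\<And>u v. E u v \<Longrightarrow> u \<in> V \<and> v \<in> V"
    using sg by (auto simp: simple_graph_def)
  define A where "A k = common_nbhd V E (set (take k xs))" for k
  have A0: "A 0 = V" by (simp add: A_def common_nbhd_def)
  have AV: "A k \<subseteq> V" for k by (auto simp: A_def common_nbhd_def)
  have Astep: "A (Suc k) = A k \<inter> nbhd V E (xs ! k)" if "k < r" for k
    using that len by (auto simp: A_def common_nbhd_def nbhd_def take_Suc_conv_app_nth)
  have Amono: "A j \<subseteq> A i" if "i \<le> j" for i j
  proof -
    have "set (take i xs) \<subseteq> set (take j xs)" using that by (rule set_take_subset_set_take)
    then show ?thesis by (auto simp: A_def common_nbhd_def)
  qed
  have md: "xs ! k \<in> A k \<and> (\<forall>u\<in>A k. card (nbhd V E u \<inter> A k) \<le> card (nbhd V E (xs ! k) \<inter> A k))"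
    if "k < r" for k
  proof (cases "k = 0")
    case True
    have "nbhd V E u \<inter> V = nbhd V E u" for u by (auto simp: nbhd_def)
    then show ?thesis using True al A0 by (auto simp: alpha_seq_def degree_def)
  next
    case False
    then show ?thesis using al that len unfolding alpha_seq_def max_deg_in_def A_def by auto
  qed
  have finA: "finite (A k)" for k using AV fV finite_subset by blast
  have nbV: "nbhd V E v \<subseteq> V" for v by (auto simp: nbhd_def)
  have dk: "delta_set V E (A k - A (Suc k))" if "k < r" for k
    unfolding delta_set_def
  proof (intro conjI ballI)
    show "A k - A (Suc k) \<subseteq> V" using AV by blast
    fix v assume v: "v \<in> A k - A (Suc k)"
    have fn: "finite (nbhd V E v)" using nbV fV finite_subset by blast
    have "degree V E v = card (nbhd V E v \<inter> A k) + card (nbhd V E v - A k)"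
      unfolding degree_def using fn by (metis card_Int_Diff)
    also have "card (nbhd V E v \<inter> A k) \<le> card (A (Suc k))"
    proof -
      have "card (nbhd V E v \<inter> A k) \<le> card (nbhd V E (xs ! k) \<inter> A k)" using md[OF that] v by blast
      also have "nbhd V E (xs ! k) \<inter> A k = A (Suc k)" using Astep[OF that] by blast
      finally show ?thesis .
    qed
    also have "card (nbhd V E v - A k) \<le> card (V - A k)"
      by (rule card_mono) (use fV nbV in auto)
    finally have 1: "degree V E v \<le> card (A (Suc k)) + card (V - A k)" by simp
    have 2: "card (V - A k) = card V - card (A k)" using AV fV by (simp add: card_Diff_subset finA)
    have 3: "card (A k - A (Suc k)) = card (A k) - card (A (Suc k))"
      using Amono[of k "Suc k"] by (simp add: card_Diff_subset finA)
    have 4: "card (A k) \<le> card V" using AV fV card_mono by blast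
    have 5: "card (A (Suc k)) \<le> card (A k)" using Amono[of k "Suc k"] finA card_mono by auto
    show "int (degree V E v) \<le> int (card V) - int (card (A k - A (Suc k)))"
      using 1 2 3 4 5 by linarith
  qed
  define f where "f v = (if \<exists>k<r-1. v \<notin> A (Suc k) then (LEAST k. v \<notin> A (Suc k)) else r - 1)" for v
  have fpart: "{v \<in> V. f v = k} = A k - A (Suc k)" if k: "k < r - 1" for k
  proof (intro set_eqI iffI)
    fix v assume "v \<in> {v \<in> V. f v = k}"
    then have vV: "v \<in> V" and fv: "f v = k" by auto
    have ex: "\<exists>k<r-1. v \<notin> A (Suc k)"
      using fv k unfolding f_def by (auto split: if_splits)
    then have L: "(LEAST k. v \<notin> A (Suc k)) = k" using fv unfolding f_def by auto
    have n1: "v \<notin> A (Suc k)" using ex L by (metis (mono_tags, lifting) LeastI)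
    have "v \<in> A k"
    proof (cases k)
      case 0 then show ?thesis using A0 vV by simp
    next
      case (Suc j)
      have "\<not> (v \<notin> A (Suc j))" using not_less_Least[of j "\<lambda>k. v \<notin> A (Suc k)"] L Suc by simp
      then show ?thesis using Suc by simp
    qed
    then show "v \<in> A k - A (Suc k)" using n1 by blast
  next
    fix v assume v: "v \<in> A k - A (Suc k)"
    have ex: "\<exists>k<r-1. v \<notin> A (Suc k)" using v k by blast
    have "(LEAST k. v \<notin> A (Suc k)) = k"
    proof (rule Least_equality)
      show "v \<notin> A (Suc k)" using v by blast
      fix m assume m: "v \<notin> A (Suc m)"
      show "k \<le> m"
      proof (rule ccontr)
        assume "\<not> k \<le> m"
        then have "A k \<subseteq> A (Suc m)" using Amono by simp
        then show False using v m by blast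
      qed
    qed
    then show "v \<in> {v \<in> V. f v = k}" using ex v AV unfolding f_def by auto
  qed
  have flast: "{v \<in> V. f v = r - 1} = A (r - 1)"
  proof (intro set_eqI iffI)
    fix v assume "v \<in> {v \<in> V. f v = r - 1}"
    then have vV: "v \<in> V" and fv: "f v = r - 1" by auto
    have "\<not> (\<exists>k<r-1. v \<notin> A (Suc k))"
    proof
      assume ex: "\<exists>k<r-1. v \<notin> A (Suc k)"
      then obtain k where "k < r - 1" "v \<notin> A (Suc k)" by blast
      then have "(LEAST k. v \<notin> A (Suc k)) \<le> k" by (simp add: Least_le)
      then show False using fv ex \<open>k < r - 1\<close> unfolding f_def by auto
    qed
    then have "v \<in> A (Suc (r - 2))" using r2 by auto
    moreover have "Suc (r - 2) = r - 1" using r2 by simp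
    ultimately show "v \<in> A (r - 1)" by simp
  next
    fix v assume v: "v \<in> A (r - 1)"
    have "\<not> (\<exists>k<r-1. v \<notin> A (Suc k))"
      using v Amono by (metis Suc_leI subsetD)
    then show "v \<in> {v \<in> V. f v = r - 1}" using v AV unfolding f_def by auto
  qed
  have flt: "\<forall>v\<in>V. f v < r"
  proof
    fix v assume "v \<in> V"
    show "f v < r"
    proof (cases "\<exists>k<r-1. v \<notin> A (Suc k)")
      case True
      then obtain k where "k < r - 1" "v \<notin> A (Suc k)" by blast
      then have "(LEAST k. v \<notin> A (Suc k)) \<le> k" by (simp add: Least_le)
      then show ?thesis using True \<open>k < r - 1\<close> unfolding f_def by auto
    next
      case False then show ?thesis using r2 unfolding f_def by auto
    qed
  qed
  have fd: "\<forall>i < r. delta_set V E {v \<in> V. f v = i}"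
  proof (intro allI impI)
    fix i assume i: "i < r"
    show "delta_set V E {v \<in> V. f v = i}"
    proof (cases "i < r - 1")
      case True then show ?thesis using fpart dk i by simp
    next
      case False
      then have "i = r - 1" using i by simp
      then show ?thesis using flast dl A_def by simp
    qed
  qed
  have gp: "gen_partite V E r" unfolding gen_partite_def using flt fd by blast
  have P1: "phi V E \<le> r" unfolding phi_def using gp by (rule Least_le)
  have P3: "W V E \<le> real r" using gp_W[OF sg flt fd] .
  have adj: "E (xs ! i) (xs ! j)" if "i < j" "j < r" for i j
  proof -
    have "xs ! j \<in> A j" using md[OF that(2)] by blast
    moreover have "xs ! i \<in> set (take j xs)" using that len by (simp add: in_set_conv_nth) (metis nth_take)
    ultimately show ?thesis by (auto simp: A_def common_nbhd_def)
  qed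
  have dist: "distinct xs"
    unfolding distinct_conv_nth
  proof (intro allI impI)
    fix i j assume "i < length xs" "j < length xs" "i \<noteq> j"
    then show "xs ! i \<noteq> xs ! j" using adj Eirr len by (metis nat_neq_iff)
  qed
  have cl: "clique V E (set xs)"
    unfolding clique_def
  proof (intro conjI ballI impI)
    show "set xs \<subseteq> V"
    proof
      fix u assume "u \<in> set xs"
      then obtain i where "i < r" "u = xs ! i" using len by (auto simp: in_set_conv_nth)
      then show "u \<in> V" using md AV by blast
    qed
    fix u v assume "u \<in> set xs" "v \<in> set xs" "u \<noteq> v"
    then obtain i j where ij: "i < r" "j < r" "u = xs ! i" "v = xs ! j"
      using len by (auto simp: in_set_conv_nth)
    then have "i \<noteq> j" using \<open>u \<noteq> v\<close> by auto
    then show "E u v" using ij adj Esym by (metis nat_neq_iff)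
  qed
  have fin: "finite {card K | K. clique V E K}"
  proof -
    have "{card K | K. clique V E K} \<subseteq> card ` Pow V" by (auto simp: clique_def)
    then show ?thesis using fV finite_subset by blast
  qed
  have "card (set xs) = r" using dist len distinct_card by blast
  then have P2: "r \<le> omega V E" unfolding omega_def using cl fin
    by (metis (mono_tags, lifting) Max_ge mem_Collect_eq)
  show ?thesis using P1 P2 P3 by simp
qed

end
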